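(* For any fixed finite tree $T$ (with at least $2$ vertices), $$\lim_{k\to\infty}\delta(S_k,T)=1,$$ where $S_k$ is the star on $k$ vertices and $\delta(S,T)=\lim_{n\to\infty}\mathrm{TV}(\mathrm{PA}(n,S),\mathrm{PA}(n,T))$.
   Context: For $n\ge k\ge 2$ and a tree $T$ on $k$ vertices, the random tree $\mathrm{PA}(n,T)$ is defined inductively: $\mathrm{PA}(k,T)=T$, and $\mathrm{PA}(n+1,T)$ is obtained from $\mathrm{PA}(n,T)$ by adding a new vertex $u$ and one edge $uv$, where $v$ is chosen among the vertices of $\mathrm{PA}(n,T)$ with probability $d_{\mathrm{PA}(n,T)}(v)/(2(n-1))$ ($d_G(v)$ denotes degree). $\mathrm{TV}$ denotes total variation distance between the laws of the random trees (viewed up to isomorphism); $\mathrm{TV}(\mathrm{PA}(n,S),\mathrm{PA}(n,T))$ is non-increasing in $n$ for $n\ge\max(|S|,|T|)$, so the limit exists. *)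

theory Defs
  imports "HOL-Probability.Probability"
begin

text \<open>Graphs on vertex set {0..<n} are represented by their edge sets, each edge a
  2-element set of naturals.\<close>

definition is_tree :: "nat \<Rightarrow> nat set set \<Rightarrow> bool" where
  "is_tree k E \<longleftrightarrow>
     E \<subseteq> {{a, b} | a b. a < k \<and> b < k \<and> a \<noteq> b} \<and>
     card E = k - 1 \<and>
     (\<forall>a<k. \<forall>b<k. (a, b) \<in> {(x, y). {x, y} \<in> E}\<^sup>*)"

definition star :: "nat \<Rightarrow> nat set set" where
  "star k = {{0, i} | i. 0 < i \<and> i < k}"

text \<open>Multiset of half-edge endpoints: vertex v occurs deg(v) times.\<close>
definition endpoints :: "nat set set \<Rightarrow> nat multiset" where
  "endpoints E = (\<Sum>e\<in>E. mset_set e)"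

text \<open>One preferential attachment step from a tree on {0..<n}: the new vertex n is
  joined to v chosen with probability deg(v)/(2(n-1)).\<close>
definition PA_step :: "nat \<Rightarrow> nat set set \<Rightarrow> nat set set pmf" where
  "PA_step n E = map_pmf (\<lambda>v. insert {v, n} E) (pmf_of_multiset (endpoints E))"

primrec PA_iter :: "nat set set \<Rightarrow> nat \<Rightarrow> nat \<Rightarrow> nat set set pmf" where
  "PA_iter T k 0 = return_pmf T"
| "PA_iter T k (Suc m) = PA_iter T k m \<bind> PA_step (k + m)"

definition PA :: "nat \<Rightarrow> nat \<Rightarrow> nat set set \<Rightarrow> nat set set pmf" where
  "PA n k T = PA_iter T k (n - k)"

definition graph_iso :: "nat set set \<Rightarrow> nat set set \<Rightarrow> bool" where
  "graph_iso E E' \<longleftrightarrow> (\<exists>f. inj_on f (\<Union>E) \<and> (\<lambda>e. f ` e) ` E = E')"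

definition iso_class :: "nat set set \<Rightarrow> nat set set set" where
  "iso_class E = {E'. graph_iso E E'}"

definition TV :: "'a pmf \<Rightarrow> 'a pmf \<Rightarrow> real" where
  "TV p q = (SUP A. \<bar>measure_pmf.prob p A - measure_pmf.prob q A\<bar>)"

definition delta :: "nat \<Rightarrow> nat set set \<Rightarrow> nat \<Rightarrow> nat set set \<Rightarrow> real" where
  "delta ks S kt T =
     lim (\<lambda>n. TV (map_pmf iso_class (PA n ks S)) (map_pmf iso_class (PA n kt T)))"

end

theory Submission
  imports Defs
begin


definition good :: "nat \<Rightarrow> nat set set \<Rightarrow> bool" where
  "good n E \<longleftrightarrow> 2 \<le> n \<and> finite E \<and> card E = n - 1 \<and>
     (\<forall>e\<in>E. \<exists>a b. e = {a,b} \<and> a \<noteq> b \<and> a < n \<and> b < n)"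

lemma good_fin_edges: "good n E \<Longrightarrow> e \<in> E \<Longrightarrow> finite e"
  unfolding good_def by auto

lemma good_Union: "good n E \<Longrightarrow> \<Union>E \<subseteq> {..<n}"
  unfolding good_def by fastforce

lemma set_mset_endpoints:
  assumes "finite E" "\<And>e. e \<in> E \<Longrightarrow> finite e"
  shows "set_mset (endpoints E) = \<Union>E"
  using assms by (simp add: endpoints_def set_mset_sum)

lemma size_endpoints:
  assumes "good n E" shows "size (endpoints E) = 2 * (n - 1)"
proof -
  have "size (endpoints E) = (\<Sum>e\<in>E. card e)" by (simp add: endpoints_def)
  also have "\<dots> = (\<Sum>e\<in>E. 2)"
    using assms unfolding good_def by (intro sum.cong) auto
  also have "\<dots> = 2 * (n - 1)" using assms unfolding good_def by simp
  finally show ?thesis .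
qed

lemma endpoints_nonempty: "good n E \<Longrightarrow> endpoints E \<noteq> {#}"
  using size_endpoints[of n E] unfolding good_def by auto

lemma endpoints_insert:
  assumes "good n E" "v < n"
  shows "endpoints (insert {v,n} E) = endpoints E + {#v, n#}"
proof -
  have "{v,n} \<notin> E" using assms unfolding good_def by fastforce
  then have "endpoints (insert {v,n} E) = mset_set {v,n} + endpoints E"
    using assms unfolding good_def endpoints_def by simp
  then show ?thesis using assms by (simp add: add.commute)
qed

lemma good_insert:
  assumes "good n E" "v < n"
  shows "good (Suc n) (insert {v,n} E)"
proof -
  have "{v,n} \<notin> E" using assms unfolding good_def by fastforce
  have c: "card (insert {v,n} E) = Suc n - 1" using \<open>{v,n} \<notin> E\<close> assms unfolding good_def by auto
  have e: "\<forall>e\<in>insert {v,n} E. \<exists>a b. e = {a,b} \<and> a \<noteq> b \<and> a < Suc n \<and> b < Suc n"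
  proof
    fix e assume "e \<in> insert {v,n} E"
    then show "\<exists>a b. e = {a,b} \<and> a \<noteq> b \<and> a < Suc n \<and> b < Suc n"
    proof
      assume "e = {v,n}" then show ?thesis using assms by (intro exI[of _ v] exI[of _ n]) auto
    next
      assume "e \<in> E"
      then obtain a b where "e = {a,b}" "a \<noteq> b" "a < n" "b < n" using assms unfolding good_def by blast
      then show ?thesis by (intro exI[of _ a] exI[of _ b]) auto
    qed
  qed
  show ?thesis using c e assms unfolding good_def by auto
qed

lemma good_PA_step:
  assumes "good n E" "E' \<in> set_pmf (PA_step n E)"
  shows "good (Suc n) E'"
proof -
  from assms obtain v where v: "v \<in># endpoints E" "E' = insert {v,n} E"
    unfolding PA_step_def using endpoints_nonempty[OF assms(1)] by auto
  have "v < n" using v(1) good_Union[OF assms(1)]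
    set_mset_endpoints[of E] assms(1) good_fin_edges[OF assms(1)] unfolding good_def by auto
  then show ?thesis using good_insert assms v by simp
qed

lemma finite_PA_step: "good n E \<Longrightarrow> finite (set_pmf (PA_step n E))"
  unfolding PA_step_def using endpoints_nonempty by auto

lemma PA_iter_good:
  assumes "good k T"
  shows "E \<in> set_pmf (PA_iter T k j) \<Longrightarrow> good (k + j) E"
proof (induction j arbitrary: E)
  case 0 then show ?case using assms by simp
next
  case (Suc j)
  then obtain E0 where "E0 \<in> set_pmf (PA_iter T k j)" "E \<in> set_pmf (PA_step (k+j) E0)" by auto
  then show ?case using Suc good_PA_step by fastforce
qed

lemma PA_iter_finite:
  assumes "good k T"
  shows "finite (set_pmf (PA_iter T k j))"
proof (induction j)
  case 0 then show ?case by simp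
next
  case (Suc j)
  then show ?case using finite_PA_step PA_iter_good[OF assms] by auto
qed



lemma graph_iso_refl: "graph_iso E E"
  unfolding graph_iso_def by (intro exI[of _ id]) auto

lemma Union_img: "\<Union>((\<lambda>e. f ` e) ` E) = f ` \<Union>E" by auto

lemma graph_iso_trans:
  assumes "graph_iso A B" "graph_iso B C" shows "graph_iso A C"
proof -
  obtain f where f: "inj_on f (\<Union>A)" "(\<lambda>e. f ` e) ` A = B" using assms(1) unfolding graph_iso_def by blast
  obtain g where g: "inj_on g (\<Union>B)" "(\<lambda>e. g ` e) ` B = C" using assms(2) unfolding graph_iso_def by blast
  have "\<Union>B = f ` \<Union>A" using f(2) by auto
  then have "inj_on (g \<circ> f) (\<Union>A)" using f(1) g(1) by (simp add: comp_inj_on)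
  moreover have "(\<lambda>e. (g \<circ> f) ` e) ` A = C" using f(2) g(2) by (auto simp: image_comp[symmetric] image_image)
  ultimately show ?thesis unfolding graph_iso_def by blast
qed

lemma graph_iso_sym:
  assumes "graph_iso A B" shows "graph_iso B A"
proof -
  obtain f where f: "inj_on f (\<Union>A)" "(\<lambda>e. f ` e) ` A = B" using assms(1) unfolding graph_iso_def by blast
  define h where "h = inv_into (\<Union>A) f"
  have U: "\<Union>B = f ` \<Union>A" using f(2) by auto
  have "inj_on h (\<Union>B)" unfolding U h_def by (rule inj_on_inv_into) simp
  moreover have "(\<lambda>e. h ` e) ` B = A"
  proof -
    have "(\<lambda>e. h ` e) ` B = (\<lambda>e. h ` (f ` e)) ` A" using f(2) by auto
    also have "\<dots> = (\<lambda>e. e) ` A"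
      by (intro image_cong refl) (unfold h_def, rule inv_into_image_cancel[OF f(1)], auto)
    finally show ?thesis by simp
  qed
  ultimately show ?thesis unfolding graph_iso_def by blast
qed

lemma iso_class_eq: "graph_iso A B \<Longrightarrow> iso_class A = iso_class B"
  unfolding iso_class_def using graph_iso_sym graph_iso_trans by blast

lemma image_mset_sum: "image_mset f (\<Sum>x\<in>A. g x) = (\<Sum>x\<in>A. image_mset f (g x))"
  by (induction A rule: infinite_finite_induct) auto

lemma endpoints_iso:
  assumes "finite E" "\<And>e. e \<in> E \<Longrightarrow> finite e" "inj_on f (\<Union>E)"
  shows "endpoints ((\<lambda>e. f ` e) ` E) = image_mset f (endpoints E)"
proof -
  have inj: "inj_on (\<lambda>e. f ` e) E"
    unfolding inj_on_def
  proof (intro ballI impI)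
    fix x y assume "x \<in> E" "y \<in> E" "f ` x = f ` y"
    then show "x = y" using inj_on_image_eq_iff[OF assms(3), of x y] by blast
  qed
  have "endpoints ((\<lambda>e. f ` e) ` E) = (\<Sum>e\<in>E. mset_set (f ` e))"
    unfolding endpoints_def by (subst sum.reindex[OF inj]) simp
  also have "\<dots> = (\<Sum>e\<in>E. image_mset f (mset_set e))"
    using assms(3) by (intro sum.cong refl, subst image_mset_mset_set) (auto intro: inj_on_subset)
  also have "\<dots> = image_mset f (endpoints E)"
    unfolding endpoints_def image_mset_sum ..
  finally show ?thesis .
qed

lemma pmf_of_multiset_image:
  assumes "M \<noteq> {#}"
  shows "pmf_of_multiset (image_mset f M) = map_pmf f (pmf_of_multiset M)"
proof (rule pmf_eqI)
  fix y
  have ne: "image_mset f M \<noteq> {#}" using assms by simp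
  have "pmf (map_pmf f (pmf_of_multiset M)) y = measure (pmf_of_multiset M) (f -` {y})"
    by (simp add: pmf_map)
  also have "\<dots> = measure (pmf_of_multiset M) (f -` {y} \<inter> set_mset M)"
    using measure_Int_set_pmf[of "pmf_of_multiset M" "f -` {y}"] assms by (simp add: Int_commute)
  also have "\<dots> = (\<Sum>x\<in>f -` {y} \<inter> set_mset M. count M x / size M)"
    using assms by (subst measure_measure_pmf_finite) auto
  also have "\<dots> = count (image_mset f M) y / size M"
    by (simp add: count_image_mset sum_divide_distrib)
  finally show "pmf (pmf_of_multiset (image_mset f M)) y = pmf (map_pmf f (pmf_of_multiset M)) y"
    using ne by simp
qed

lemma step_iso:
  assumes "good n E" "good n E'" "graph_iso E E'"
  shows "map_pmf iso_class (PA_step n E) = map_pmf iso_class (PA_step n E')"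
proof -
  obtain f where f: "inj_on f (\<Union>E)" "(\<lambda>e. f ` e) ` E = E'" using assms(3) unfolding graph_iso_def by blast
  have fin: "finite E" using assms(1) unfolding good_def by auto
  have ne: "endpoints E \<noteq> {#}" using endpoints_nonempty[OF assms(1)] .
  have ep: "endpoints E' = image_mset f (endpoints E)"
    using endpoints_iso[OF fin good_fin_edges[OF assms(1)] f(1)] f(2) by simp
  have setE: "set_mset (endpoints E) = \<Union>E" using set_mset_endpoints[OF fin good_fin_edges[OF assms(1)]] .
  have UE: "\<Union>E \<subseteq> {..<n}" using good_Union[OF assms(1)] .
  have UE': "f ` \<Union>E \<subseteq> {..<n}" using good_Union[OF assms(2)] f(2) by auto
  have "map_pmf iso_class (PA_step n E') =
        map_pmf (\<lambda>v. iso_class (insert {v,n} E')) (map_pmf f (pmf_of_multiset (endpoints E)))"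
    unfolding PA_step_def ep pmf_of_multiset_image[OF ne] by (simp add: pmf.map_comp o_def)
  also have "\<dots> = map_pmf (\<lambda>v. iso_class (insert {f v,n} E')) (pmf_of_multiset (endpoints E))"
    by (simp add: pmf.map_comp o_def)
  also have "\<dots> = map_pmf (\<lambda>v. iso_class (insert {v,n} E)) (pmf_of_multiset (endpoints E))"
  proof (rule map_pmf_cong[OF refl])
    fix v assume "v \<in> set_pmf (pmf_of_multiset (endpoints E))"
    then have v: "v \<in> \<Union>E" using ne setE by simp
    define g where "g = f(n := n)"
    have nE: "n \<notin> \<Union>E" using UE by auto
    have geq: "\<And>x. x \<in> \<Union>E \<Longrightarrow> g x = f x"
    proof -
      fix x assume "x \<in> \<Union>E"
      then have "x \<noteq> n" using nE by blast
      then show "g x = f x" unfolding g_def by simp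
    qed
    have "inj_on g (\<Union>E) = inj_on f (\<Union>E)" by (rule inj_on_cong) (rule geq)
    then have i1: "inj_on g (\<Union>E)" using f(1) by simp
    have gim: "g ` \<Union>E = f ` \<Union>E" by (rule image_cong[OF refl geq])
    have "g ` (\<Union>E - {n}) \<subseteq> {..<n}" using gim UE' by blast
    then have nn: "n \<notin> g ` (\<Union>E - {n})" by blast
    have gn: "g n = n" unfolding g_def by simp
    have "inj_on g (insert n (\<Union>E))" using i1 nn gn by (simp add: inj_on_insert)
    moreover have "\<Union>(insert {v,n} E) = insert n (\<Union>E)" using v by blast
    moreover have "(\<lambda>e. g ` e) ` insert {v,n} E = insert {f v, n} E'"
    proof -
      have "\<And>e. e \<in> E \<Longrightarrow> g ` e = f ` e"
      proof -
        fix e assume "e \<in> E"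
        then show "g ` e = f ` e" by (intro image_cong refl geq) blast
      qed
      then have "(\<lambda>e. g ` e) ` E = (\<lambda>e. f ` e) ` E" by (rule image_cong[OF refl])
      moreover have "g ` {v,n} = {f v, n}" using geq[OF v] gn by simp
      ultimately show ?thesis using f(2) by simp
    qed
    ultimately have "graph_iso (insert {v,n} E) (insert {f v, n} E')"
      unfolding graph_iso_def by (intro exI[of _ g] conjI) simp_all
    then show "iso_class (insert {f v,n} E') = iso_class (insert {v,n} E)"
      by (rule iso_class_eq[OF graph_iso_sym])
  qed
  also have "\<dots> = map_pmf iso_class (PA_step n E)"
    unfolding PA_step_def by (simp add: pmf.map_comp o_def)
  finally show ?thesis by simp
qed



lemma TV_bdd: "bdd_above (range (\<lambda>A. \<bar>measure_pmf.prob p A - measure_pmf.prob q A\<bar>))"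
proof (rule bdd_aboveI[of _ 1])
  fix x assume "x \<in> range (\<lambda>A. \<bar>measure_pmf.prob p A - measure_pmf.prob q A\<bar>)"
  then obtain A where "x = \<bar>measure_pmf.prob p A - measure_pmf.prob q A\<bar>" by auto
  moreover have "measure_pmf.prob p A \<le> 1" "measure_pmf.prob q A \<le> 1" "0 \<le> measure_pmf.prob p A" "0 \<le> measure_pmf.prob q A"
    by auto
  ultimately show "x \<le> 1" unfolding abs_le_iff by linarith
qed

lemma TV_ge: "\<bar>measure_pmf.prob p A - measure_pmf.prob q A\<bar> \<le> TV p q"
  unfolding TV_def by (rule cSUP_upper[OF _ TV_bdd]) simp

lemma TV_le1: "TV p q \<le> 1"
  unfolding TV_def
proof (rule cSUP_least)
  fix A
  have "measure_pmf.prob p A \<le> 1" "measure_pmf.prob q A \<le> 1" "0 \<le> measure_pmf.prob p A" "0 \<le> measure_pmf.prob q A"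
    by auto
  then show "\<bar>measure_pmf.prob p A - measure_pmf.prob q A\<bar> \<le> 1" unfolding abs_le_iff by linarith
qed simp

lemma TV_nonneg: "0 \<le> TV p q"
  using TV_ge[of p "{}" q] by simp

lemma TV_sym: "TV p q = TV q p"
  unfolding TV_def by (simp add: abs_minus_commute)

lemma prob_bind_sum:
  assumes "finite U" "set_pmf p \<subseteq> U" "\<And>x. x \<in> U \<Longrightarrow> finite (set_pmf (K x))"
  shows "measure_pmf.prob (p \<bind> K) A = (\<Sum>x\<in>U. pmf p x * measure_pmf.prob (K x) A)"
proof -
  have "measure_pmf.prob (p \<bind> K) A = measure_pmf.expectation (p \<bind> K) (indicator A)"
    by simp
  also have "\<dots> = (\<Sum>x\<in>U. pmf p x *\<^sub>R measure_pmf.expectation (K x) (indicator A))"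
    using assms by (intro pmf_expectation_bind) auto
  also have "\<dots> = (\<Sum>x\<in>U. pmf p x * measure_pmf.prob (K x) A)"
    by simp
  finally show ?thesis .
qed

lemma TV_bind_one:
  assumes "finite (set_pmf p)" "finite (set_pmf q)"
    "\<And>x. x \<in> set_pmf p \<union> set_pmf q \<Longrightarrow> finite (set_pmf (K x))"
  shows "measure_pmf.prob (p \<bind> K) A - measure_pmf.prob (q \<bind> K) A \<le> TV p q"
proof -
  define U where "U = set_pmf p \<union> set_pmf q"
  define g where "g x = measure_pmf.prob (K x) A" for x
  define P where "P = {x\<in>U. pmf q x < pmf p x}"
  have fU: "finite U" using assms unfolding U_def by auto
  have "measure_pmf.prob (p \<bind> K) A - measure_pmf.prob (q \<bind> K) A
      = (\<Sum>x\<in>U. pmf p x * g x) - (\<Sum>x\<in>U. pmf q x * g x)"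
    unfolding g_def using fU assms
    by (subst prob_bind_sum[of U], auto simp: U_def, subst prob_bind_sum[of U], auto simp: U_def)
  also have "\<dots> = (\<Sum>x\<in>U. (pmf p x - pmf q x) * g x)"
    by (simp add: sum_subtractf left_diff_distrib)
  also have "\<dots> \<le> (\<Sum>x\<in>U. (if x \<in> P then pmf p x - pmf q x else 0))"
  proof (rule sum_mono)
    fix x assume "x \<in> U"
    have "0 \<le> g x" "g x \<le> 1" unfolding g_def by auto
    show "(pmf p x - pmf q x) * g x \<le> (if x \<in> P then pmf p x - pmf q x else 0)"
    proof (cases "x \<in> P")
      case True
      then have "0 \<le> pmf p x - pmf q x" unfolding P_def by auto
      then show ?thesis using True \<open>g x \<le> 1\<close> by (simp add: mult_left_le)
    next
      case False
      then have "pmf p x - pmf q x \<le> 0" using \<open>x \<in> U\<close> unfolding P_def by auto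
      then show ?thesis using False \<open>0 \<le> g x\<close> by (simp add: mult_nonpos_nonneg)
    qed
  qed
  also have "\<dots> = (\<Sum>x\<in>P. pmf p x - pmf q x)"
    using fU unfolding P_def by (simp add: sum.If_cases Int_def)
  also have "\<dots> = measure_pmf.prob p P - measure_pmf.prob q P"
    using fU unfolding P_def by (simp add: measure_measure_pmf_finite sum_subtractf)
  also have "\<dots> \<le> TV p q" using TV_ge[of p P q] by simp
  finally show ?thesis .
qed

lemma TV_bind:
  assumes "finite (set_pmf p)" "finite (set_pmf q)"
    "\<And>x. x \<in> set_pmf p \<union> set_pmf q \<Longrightarrow> finite (set_pmf (K x))"
  shows "TV (p \<bind> K) (q \<bind> K) \<le> TV p q"
  unfolding TV_def[of "p \<bind> K"]
proof (rule cSUP_least)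
  fix A
  have "measure_pmf.prob (p \<bind> K) A - measure_pmf.prob (q \<bind> K) A \<le> TV p q"
    using TV_bind_one assms by blast
  moreover have "measure_pmf.prob (q \<bind> K) A - measure_pmf.prob (p \<bind> K) A \<le> TV q p"
    using TV_bind_one[of q p K A] assms by blast
  ultimately show "\<bar>measure_pmf.prob (p \<bind> K) A - measure_pmf.prob (q \<bind> K) A\<bar> \<le> TV p q"
    using TV_sym[of p q] by linarith
qed simp



lemma PA_Suc: "k \<le> n \<Longrightarrow> PA (Suc n) k T = PA n k T \<bind> PA_step n"
  unfolding PA_def by (simp add: Suc_diff_le)

lemma PA_good: "good k T \<Longrightarrow> k \<le> n \<Longrightarrow> E \<in> set_pmf (PA n k T) \<Longrightarrow> good n E"
  unfolding PA_def using PA_iter_good[of k T E "n - k"] by simp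

lemma PA_finite: "good k T \<Longrightarrow> finite (set_pmf (PA n k T))"
  unfolding PA_def using PA_iter_finite by simp

definition Kern :: "nat \<Rightarrow> nat set set set \<Rightarrow> nat set set set pmf" where
  "Kern n c = map_pmf iso_class (PA_step n (SOME E. E \<in> c \<and> good n E))"

lemma Kern_iso: "good n E \<Longrightarrow> Kern n (iso_class E) = map_pmf iso_class (PA_step n E)"
proof -
  assume g: "good n E"
  have "E \<in> iso_class E \<and> good n E" using g graph_iso_refl unfolding iso_class_def by auto
  then have "(SOME E'. E' \<in> iso_class E \<and> good n E') \<in> iso_class E \<and> good n (SOME E'. E' \<in> iso_class E \<and> good n E')"
    by (rule someI)
  then show ?thesis unfolding Kern_def using step_iso[OF g] unfolding iso_class_def by auto
qed

lemma map_PA_Suc: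
  assumes "good k T" "k \<le> n"
  shows "map_pmf iso_class (PA (Suc n) k T) = map_pmf iso_class (PA n k T) \<bind> Kern n"
proof -
  have "map_pmf iso_class (PA (Suc n) k T) = PA n k T \<bind> (\<lambda>E. map_pmf iso_class (PA_step n E))"
    using PA_Suc[OF assms(2)] by (simp add: map_bind_pmf)
  also have "\<dots> = PA n k T \<bind> (\<lambda>E. Kern n (iso_class E))"
    using Kern_iso PA_good[OF assms] by (intro bind_pmf_cong) auto
  also have "\<dots> = map_pmf iso_class (PA n k T) \<bind> Kern n" by (simp add: bind_map_pmf)
  finally show ?thesis .
qed

lemma TV_mono_step:
  assumes "good ks S" "good kt T" "ks \<le> n" "kt \<le> n"
  shows "TV (map_pmf iso_class (PA (Suc n) ks S)) (map_pmf iso_class (PA (Suc n) kt T))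
       \<le> TV (map_pmf iso_class (PA n ks S)) (map_pmf iso_class (PA n kt T))"
  unfolding map_PA_Suc[OF assms(1,3)] map_PA_Suc[OF assms(2,4)]
proof (rule TV_bind)
  show "finite (set_pmf (map_pmf iso_class (PA n ks S)))" using PA_finite[OF assms(1)] by simp
  show "finite (set_pmf (map_pmf iso_class (PA n kt T)))" using PA_finite[OF assms(2)] by simp
  fix c assume "c \<in> set_pmf (map_pmf iso_class (PA n ks S)) \<union> set_pmf (map_pmf iso_class (PA n kt T))"
  then obtain E where "c = iso_class E" "good n E"
    using PA_good[OF assms(1,3)] PA_good[OF assms(2,4)] by auto
  then show "finite (set_pmf (Kern n c))" using Kern_iso finite_PA_step by simp
qed

lemma delta_bounds:
  assumes "good ks S" "good kt T"
    and lb: "\<And>n. n \<ge> N \<Longrightarrow> c \<le> TV (map_pmf iso_class (PA n ks S)) (map_pmf iso_class (PA n kt T))"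
  shows "c \<le> delta ks S kt T \<and> delta ks S kt T \<le> 1"
proof -
  define X where "X n = TV (map_pmf iso_class (PA n ks S)) (map_pmf iso_class (PA n kt T))" for n
  define N0 where "N0 = max ks kt"
  have "decseq (\<lambda>j. X (j + N0))"
    unfolding decseq_Suc_iff X_def N0_def
    using TV_mono_step[OF assms(1,2)] by (simp add: add.commute)
  moreover have "\<forall>i. 0 \<le> X (i + N0)" unfolding X_def using TV_nonneg by blast
  ultimately obtain L where L: "(\<lambda>j. X (j + N0)) \<longlonglongrightarrow> L" by (rule decseq_convergent)
  then have XL: "X \<longlonglongrightarrow> L" by (rule LIMSEQ_offset)
  then have d: "delta ks S kt T = L" unfolding delta_def X_def[abs_def] by (simp add: limI)
  have "c \<le> L" using XL by (rule LIMSEQ_le_const) (use lb X_def in auto)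
  moreover have "L \<le> 1" using XL by (rule LIMSEQ_le_const2) (use TV_le1 X_def in auto)
  ultimately show ?thesis using d by simp
qed



lemma exp_sum: "finite (set_pmf P) \<Longrightarrow>
   measure_pmf.expectation P (f :: _ \<Rightarrow> real) = (\<Sum>x\<in>set_pmf P. pmf P x * f x)"
  by (subst integral_measure_pmf[of "set_pmf P"]) auto

lemma exp_bind:
  assumes "finite (set_pmf P)" "\<And>x. x \<in> set_pmf P \<Longrightarrow> finite (set_pmf (K x))"
  shows "measure_pmf.expectation (P \<bind> K) (h :: _ \<Rightarrow> real) = measure_pmf.expectation P (\<lambda>x. measure_pmf.expectation (K x) h)"
  using assms by (subst pmf_expectation_bind[of "set_pmf P"]) (auto simp: exp_sum)

lemma exp_cong:
  assumes "finite (set_pmf P)" "\<And>x. x \<in> set_pmf P \<Longrightarrow> f x = g x"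
  shows "measure_pmf.expectation P (f :: _ \<Rightarrow> real) = measure_pmf.expectation P g"
  using assms by (simp add: exp_sum)

lemma exp_mono:
  assumes "finite (set_pmf P)" "\<And>x. x \<in> set_pmf P \<Longrightarrow> f x \<le> g x"
  shows "measure_pmf.expectation P (f :: _ \<Rightarrow> real) \<le> measure_pmf.expectation P g"
  using assms by (simp add: exp_sum sum_mono mult_left_mono)

lemma exp_lin:
  assumes "finite (set_pmf P)"
  shows "measure_pmf.expectation P (\<lambda>x. a * f x + b) = a * measure_pmf.expectation P f + (b::real)"
proof -
  have "(\<Sum>x\<in>set_pmf P. pmf P x * (a * f x + b)) = a * (\<Sum>x\<in>set_pmf P. pmf P x * f x) + b * (\<Sum>x\<in>set_pmf P. pmf P x)"
    by (simp add: sum_distrib_left sum.distrib algebra_simps)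
  also have "(\<Sum>x\<in>set_pmf P. pmf P x) = 1" using assms by (simp add: sum_pmf_eq_1)
  finally show ?thesis using assms by (simp add: exp_sum)
qed

lemma exp_lin2:
  assumes "finite (set_pmf P)"
  shows "measure_pmf.expectation P (\<lambda>x. a * f x + b * g x + c) = a * measure_pmf.expectation P f + b * measure_pmf.expectation P g + (c::real)"
proof -
  have "(\<Sum>x\<in>set_pmf P. pmf P x * (a * f x + b * g x + c)) = a * (\<Sum>x\<in>set_pmf P. pmf P x * f x) + b * (\<Sum>x\<in>set_pmf P. pmf P x * g x) + c * (\<Sum>x\<in>set_pmf P. pmf P x)"
    by (simp add: sum_distrib_left sum.distrib algebra_simps)
  also have "(\<Sum>x\<in>set_pmf P. pmf P x) = 1" using assms by (simp add: sum_pmf_eq_1)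
  finally show ?thesis using assms by (simp add: exp_sum)
qed

lemma prob_exp: "measure_pmf.prob P A = measure_pmf.expectation P (indicator A :: _ \<Rightarrow> real)"
  by simp

lemma exp_step:
  assumes "good n E"
  shows "measure_pmf.expectation (PA_step n E) (\<phi> :: _ \<Rightarrow> real) =
    (\<Sum>v\<in>set_mset (endpoints E). real (count (endpoints E) v) * \<phi> (insert {v,n} E)) / (2 * (real n - 1))"
proof -
  let ?M = "endpoints E"
  have ne: "?M \<noteq> {#}" using endpoints_nonempty[OF assms] .
  have sz: "real (size ?M) = 2 * (real n - 1)" using size_endpoints[OF assms] assms unfolding good_def by auto
  have "measure_pmf.expectation (PA_step n E) \<phi> = measure_pmf.expectation (pmf_of_multiset ?M) (\<lambda>v. \<phi> (insert {v,n} E))"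
    unfolding PA_step_def by simp
  also have "\<dots> = (\<Sum>v\<in>set_mset ?M. pmf (pmf_of_multiset ?M) v * \<phi> (insert {v,n} E))"
    using ne by (subst exp_sum) auto
  also have "\<dots> = (\<Sum>v\<in>set_mset ?M. real (count ?M v) * \<phi> (insert {v,n} E)) / (2 * (real n - 1))"
    using ne sz by (simp add: sum_divide_distrib)
  finally show ?thesis .
qed

lemma sum_count_endpoints:
  assumes "good n E"
  shows "(\<Sum>v\<in>set_mset (endpoints E). real (count (endpoints E) v)) = 2 * (real n - 1)"
proof -
  have "(\<Sum>v\<in>set_mset (endpoints E). real (count (endpoints E) v)) = real (size (endpoints E))"
    by (simp add: size_multiset_overloaded_eq)
  then show ?thesis using size_endpoints[OF assms] assms unfolding good_def by auto
qed

lemma endpoints_vertex_lt: "good n E \<Longrightarrow> v \<in># endpoints E \<Longrightarrow> v < n"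
  using set_mset_endpoints[of E] good_Union[of n E] good_fin_edges[of n E] unfolding good_def by auto

lemma count_step:
  assumes "good n E" "v \<in># endpoints E"
  shows "count (endpoints (insert {v,n} E)) x = count (endpoints E) x + (if x = v then 1 else 0) + (if x = n then 1 else 0)"
  using endpoints_insert[OF assms(1) endpoints_vertex_lt[OF assms]] by auto

lemma n_notin: "good n E \<Longrightarrow> n \<notin># endpoints E"
  using endpoints_vertex_lt by blast



definition DD :: "nat set set \<Rightarrow> real" where "DD E = real (count (endpoints E) 0)"
definition hF :: "nat \<Rightarrow> real" where "hF d = real d * (real d + 1) * (real d + 2)"
definition FF :: "nat set set \<Rightarrow> real" where
  "FF E = (\<Sum>x\<in>set_mset (endpoints E). hF (count (endpoints E) x))"

lemma sum_delta0: "(\<Sum>v\<in>set_mset M. real (count M v) * (if v = 0 then c else 0)) = real (count M 0) * c"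
proof -
  have "(\<Sum>v\<in>set_mset M. real (count M v) * (if v = 0 then c else 0)) = (\<Sum>v\<in>set_mset M. if v = 0 then real (count M v) * c else 0)"
    by (intro sum.cong) auto
  also have "\<dots> = (if 0 \<in> set_mset M then real (count M 0) * c else 0)" by (simp add: sum.delta)
  also have "\<dots> = real (count M 0) * c" by (auto simp: not_in_iff)
  finally show ?thesis .
qed

lemma DD_step:
  assumes "good n E" "v \<in># endpoints E"
  shows "DD (insert {v,n} E) = DD E + (if v = 0 then 1 else 0)"
proof -
  have "n \<noteq> 0" using assms unfolding good_def by auto
  then show ?thesis unfolding DD_def using count_step[OF assms, of 0] by auto
qed

lemma exp_step_D:
  assumes "good n E"
  shows "measure_pmf.expectation (PA_step n E) DD = DD E * (1 + 1 / (2 * (real n - 1)))"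
proof -
  let ?M = "endpoints E"
  have n1: "real n - 1 > 0" using assms unfolding good_def by auto
  have "(\<Sum>v\<in>set_mset ?M. real (count ?M v) * DD (insert {v,n} E))
     = (\<Sum>v\<in>set_mset ?M. real (count ?M v) * DD E + real (count ?M v) * (if v = 0 then 1 else 0))"
    using DD_step[OF assms] by (intro sum.cong) (auto simp: algebra_simps)
  also have "\<dots> = DD E * (2 * (real n - 1)) + DD E"
    by (simp add: sum.distrib sum_delta0 sum_distrib_right[symmetric] sum_count_endpoints[OF assms] DD_def mult.commute)
  finally show ?thesis using n1 by (simp add: exp_step[OF assms] field_simps)
qed

lemma exp_step_D2:
  assumes "good n E"
  shows "measure_pmf.expectation (PA_step n E) (\<lambda>E. DD E ^ 2) =
     DD E ^ 2 * (1 + 1 / (real n - 1)) + DD E / (2 * (real n - 1))"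
proof -
  let ?M = "endpoints E"
  have n1: "real n - 1 > 0" using assms unfolding good_def by auto
  have "(\<Sum>v\<in>set_mset ?M. real (count ?M v) * DD (insert {v,n} E) ^ 2)
     = (\<Sum>v\<in>set_mset ?M. real (count ?M v) * DD E ^ 2 + real (count ?M v) * (if v = 0 then 2 * DD E + 1 else 0))"
    using DD_step[OF assms] by (intro sum.cong) (auto simp: algebra_simps power2_eq_square)
  also have "\<dots> = DD E ^ 2 * (2 * (real n - 1)) + DD E * (2 * DD E + 1)"
    by (simp add: sum.distrib sum_delta0 sum_distrib_right[symmetric] sum_count_endpoints[OF assms] DD_def mult.commute)
  finally have "measure_pmf.expectation (PA_step n E) (\<lambda>E. DD E ^ 2) = (DD E ^ 2 * (2 * (real n - 1)) + DD E * (2 * DD E + 1)) / (2 * (real n - 1))"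
    by (simp add: exp_step[OF assms])
  moreover have "\<And>d x::real. d > 0 \<Longrightarrow> (x ^ 2 * (2 * d) + x * (2 * x + 1)) / (2 * d) = x ^ 2 * (1 + 1 / d) + x / (2 * d)"
    by (simp add: field_simps power2_eq_square)
  ultimately show ?thesis using n1 by (metis (no_types, lifting))
qed

lemma hF_Suc: "hF (Suc d) = hF d + 3 * (real d + 1) * (real d + 2)"
  unfolding hF_def by (simp add: algebra_simps)

lemma FF_step:
  assumes "good n E" "v \<in># endpoints E"
  shows "FF (insert {v,n} E) = FF E + 6 + 3 * (real (count (endpoints E) v) + 1) * (real (count (endpoints E) v) + 2)"
proof -
  let ?M = "endpoints E" and ?M' = "endpoints (insert {v,n} E)"
  let ?S = "set_mset ?M"
  have vn: "v < n" using endpoints_vertex_lt[OF assms] .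
  have M': "?M' = ?M + {#v, n#}" using endpoints_insert[OF assms(1) vn] .
  have S': "set_mset ?M' = insert n ?S" using M' assms(2) by auto
  have nS: "n \<notin> ?S" using n_notin[OF assms(1)] .
  have cn: "count ?M' n = 1" using count_step[OF assms, of n] vn nS by (simp add: not_in_iff)
  have cx: "\<And>x. x \<in> ?S \<Longrightarrow> count ?M' x = count ?M x + (if x = v then 1 else 0)"
    using count_step[OF assms] nS by fastforce
  have "FF (insert {v,n} E) = hF 1 + (\<Sum>x\<in>?S. hF (count ?M' x))"
    unfolding FF_def S' using nS cn by simp
  also have "(\<Sum>x\<in>?S. hF (count ?M' x)) = (\<Sum>x\<in>?S. hF (count ?M x + (if x = v then 1 else 0)))"
    using cx by (intro sum.cong) auto
  also have "\<dots> = hF (count ?M v + 1) + (\<Sum>x\<in>?S - {v}. hF (count ?M x + (if x = v then 1 else 0)))"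
    using assms(2) by (subst sum.remove[of _ v]) auto
  also have "(\<Sum>x\<in>?S - {v}. hF (count ?M x + (if x = v then 1 else 0))) = (\<Sum>x\<in>?S - {v}. hF (count ?M x))"
    by (intro sum.cong) auto
  also have "(\<Sum>x\<in>?S - {v}. hF (count ?M x)) = FF E - hF (count ?M v)"
    unfolding FF_def using assms(2) by (subst sum.remove[of _ v]) auto
  finally show ?thesis using hF_Suc[of "count ?M v"] by (simp add: hF_def)
qed

lemma exp_step_F:
  assumes "good n E"
  shows "measure_pmf.expectation (PA_step n E) FF = FF E * (1 + 3 / (2 * (real n - 1))) + 6"
proof -
  let ?M = "endpoints E"
  have n1: "real n - 1 > 0" using assms unfolding good_def by auto
  have "(\<Sum>v\<in>set_mset ?M. real (count ?M v) * FF (insert {v,n} E))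
     = (\<Sum>v\<in>set_mset ?M. real (count ?M v) * (FF E + 6) + 3 * hF (count ?M v))"
    using FF_step[OF assms] by (intro sum.cong) (auto simp: algebra_simps hF_def)
  also have "\<dots> = (FF E + 6) * (2 * (real n - 1)) + 3 * FF E"
    by (simp add: sum.distrib sum_distrib_right[symmetric] sum_distrib_left[symmetric] sum_count_endpoints[OF assms] FF_def mult.commute)
  finally show ?thesis using n1 by (simp add: exp_step[OF assms] field_simps)
qed



definition pr :: "real \<Rightarrow> nat \<Rightarrow> nat \<Rightarrow> real" where
  "pr a x j = (\<Prod>i<j. 1 + a / (2 * (real (x + i) - 1)))"

lemma pr_Suc: "pr a x (Suc j) = pr a x j * (1 + a / (2 * (real (x + j) - 1)))"
  unfolding pr_def by simp

lemma exp_iter_step: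
  fixes \<phi> \<psi> chh :: "nat set set \<Rightarrow> real"
  assumes "good k T"
    and "\<And>E. good (k + j) E \<Longrightarrow> measure_pmf.expectation (PA_step (k + j) E) \<phi> = a * \<psi> E + b * chh E + c"
  shows "measure_pmf.expectation (PA_iter T k (Suc j)) \<phi> =
     a * measure_pmf.expectation (PA_iter T k j) \<psi> + b * measure_pmf.expectation (PA_iter T k j) chh + c"
proof -
  have "measure_pmf.expectation (PA_iter T k (Suc j)) \<phi> =
      measure_pmf.expectation (PA_iter T k j) (\<lambda>E. measure_pmf.expectation (PA_step (k + j) E) \<phi>)"
    unfolding PA_iter.simps by (rule exp_bind) (use PA_iter_finite[OF assms(1)] PA_iter_good[OF assms(1)] finite_PA_step in auto)
  also have "\<dots> = measure_pmf.expectation (PA_iter T k j) (\<lambda>E. a * \<psi> E + b * chh E + c)"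
    using PA_iter_finite[OF assms(1)] PA_iter_good[OF assms(1)] assms(2)
    by (intro exp_cong) auto
  also have "\<dots> = a * measure_pmf.expectation (PA_iter T k j) \<psi> + b * measure_pmf.expectation (PA_iter T k j) chh + c"
    using PA_iter_finite[OF assms(1)] by (rule exp_lin2)
  finally show ?thesis .
qed

lemma exp_FF_iter:
  assumes "good k T"
  shows "measure_pmf.expectation (PA_iter T k j) FF + 12 * (real (k + j) - 1) = (FF T + 12 * (real k - 1)) * pr 3 k j"
proof (induction j)
  case 0 then show ?case by (simp add: pr_def)
next
  case (Suc j)
  define d where "d = real (k + j) - 1"
  have dpos: "d > 0" using assms unfolding good_def d_def by auto
  have E1: "measure_pmf.expectation (PA_iter T k (Suc j)) FF =
      (1 + 3 / (2 * d)) * measure_pmf.expectation (PA_iter T k j) FF + 0 * measure_pmf.expectation (PA_iter T k j) FF + 6"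
    by (rule exp_iter_step[OF assms]) (use exp_step_F d_def in \<open>auto simp: algebra_simps\<close>)
  define b where "b = measure_pmf.expectation (PA_iter T k j) FF"
  have IH: "b + 12 * d = (FF T + 12 * (real k - 1)) * pr 3 k j" using Suc unfolding b_def d_def .
  have e1: "real (k + Suc j) - 1 = d + 1" unfolding d_def by simp
  have e2: "(b + 12 * d) * (1 + 3 / (2 * d)) = (1 + 3 / (2 * d)) * b + 12 * d + 18"
    using dpos by (simp add: field_simps)
  have "pr 3 k (Suc j) = pr 3 k j * (1 + 3 / (2 * d))" unfolding pr_Suc d_def ..
  then have "(FF T + 12 * (real k - 1)) * pr 3 k (Suc j) = (b + 12 * d) * (1 + 3 / (2 * d))"
    using IH by (simp add: mult.assoc)
  then show ?case unfolding e1 using E1 e2 unfolding b_def by simp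
qed



lemma star_img: "star m = (\<lambda>i. {0, i}) ` {1..<m}"
  unfolding star_def by auto

lemma star_inj: "inj_on (\<lambda>i. {0::nat, i}) {1..<m}"
  unfolding inj_on_def by (auto simp: doubleton_eq_iff)

lemma good_star: "2 \<le> m \<Longrightarrow> good m (star m)"
proof -
  assume m: "2 \<le> m"
  have c: "card (star m) = m - 1" unfolding star_img using card_image[OF star_inj, of m] by simp
  have e: "\<forall>e\<in>star m. \<exists>a b. e = {a,b} \<and> a \<noteq> b \<and> a < m \<and> b < m"
  proof
    fix e assume "e \<in> star m"
    then obtain i where "e = {0,i}" "1 \<le> i" "i < m" unfolding star_img by auto
    then show "\<exists>a b. e = {a,b} \<and> a \<noteq> b \<and> a < m \<and> b < m" by (intro exI[of _ 0] exI[of _ i]) auto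
  qed
  have "finite (star m)" unfolding star_img by simp
  then show ?thesis using m c e unfolding good_def by blast
qed

lemma DD_star: "DD (star m) = real m - 1" if "2 \<le> m"
proof -
  have "endpoints (star m) = (\<Sum>i\<in>{1..<m}. mset_set {0, i})"
    unfolding endpoints_def star_img by (subst sum.reindex[OF star_inj]) simp
  then have "count (endpoints (star m)) 0 = (\<Sum>i\<in>{1..<m}. count (mset_set {0::nat, i}) 0)"
    by (simp add: count_sum)
  also have "\<dots> = (\<Sum>i\<in>{1..<m}. 1)" by (intro sum.cong) auto
  finally show ?thesis unfolding DD_def using that by simp
qed

lemma exp_DD_iter:
  assumes "good k T"
  shows "measure_pmf.expectation (PA_iter T k j) DD = DD T * pr 1 k j"
proof (induction j)
  case 0 then show ?case by (simp add: pr_def)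
next
  case (Suc j)
  have "measure_pmf.expectation (PA_iter T k (Suc j)) DD =
      (1 + 1 / (2 * (real (k + j) - 1))) * measure_pmf.expectation (PA_iter T k j) DD + 0 * measure_pmf.expectation (PA_iter T k j) DD + 0"
    by (rule exp_iter_step[OF assms]) (use exp_step_D in \<open>auto simp: algebra_simps\<close>)
  then show ?case using Suc by (simp add: pr_Suc algebra_simps)
qed

lemma exp_DD2_iter:
  assumes "good k T"
  shows "measure_pmf.expectation (PA_iter T k (Suc j)) (\<lambda>E. DD E ^ 2) =
    (1 + 1 / (real (k + j) - 1)) * measure_pmf.expectation (PA_iter T k j) (\<lambda>E. DD E ^ 2)
    + (1 / (2 * (real (k + j) - 1))) * measure_pmf.expectation (PA_iter T k j) DD + 0"
  by (rule exp_iter_step[OF assms]) (use exp_step_D2 in \<open>auto simp: algebra_simps\<close>)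

lemma pr_ge1: "2 \<le> x \<Longrightarrow> 0 \<le> a \<Longrightarrow> 1 \<le> pr a x j"
  unfolding pr_def by (rule prod_ge_1) auto

lemma var_step:
  fixes s \<mu> c x :: real
  assumes "0 \<le> \<mu>" "0 \<le> c" "0 \<le> x" "s \<le> (1 + c) * \<mu>^2 - 3/2 * \<mu>"
  shows "(1 + 2 * x) * s + x * \<mu> \<le> (1 + c) * (\<mu> * (1 + x))^2 - 3/2 * (\<mu> * (1 + x))"
proof -
  have "(1 + 2 * x) * s \<le> (1 + 2 * x) * ((1 + c) * \<mu>^2 - 3/2 * \<mu>)"
    using assms by (intro mult_left_mono) auto
  moreover have "(1 + c) * (\<mu> * (1 + x))^2 - 3/2 * (\<mu> * (1 + x)) - ((1 + 2 * x) * ((1 + c) * \<mu>^2 - 3/2 * \<mu>) + x * \<mu>)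
      = (1 + c) * \<mu>^2 * x^2 + 1/2 * \<mu> * x"
    by (simp add: algebra_simps power2_eq_square)
  moreover have "0 \<le> (1 + c) * \<mu>^2 * x^2 + 1/2 * \<mu> * x" using assms by simp
  ultimately show ?thesis by linarith
qed

lemma var_bound:
  assumes "good k T" "DD T > 0"
  shows "measure_pmf.expectation (PA_iter T k j) (\<lambda>E. DD E ^ 2) \<le>
     (1 + 3 / (2 * DD T)) * (measure_pmf.expectation (PA_iter T k j) DD)^2 - 3/2 * measure_pmf.expectation (PA_iter T k j) DD"
proof (induction j)
  case 0 then show ?case using assms(2) by (simp add: field_simps power2_eq_square)
next
  case (Suc j)
  define d where "d = real (k + j) - 1"
  have dpos: "d > 0" using assms unfolding good_def d_def by auto
  define \<mu> where "\<mu> = measure_pmf.expectation (PA_iter T k j) DD"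
  have mu0: "0 \<le> \<mu>" unfolding \<mu>_def exp_DD_iter[OF assms(1)]
    using assms pr_ge1[of k 1 j] unfolding good_def by simp
  have mus: "measure_pmf.expectation (PA_iter T k (Suc j)) DD = \<mu> * (1 + 1 / (2 * d))"
    unfolding \<mu>_def exp_DD_iter[OF assms(1)] pr_Suc d_def by simp
  have e: "measure_pmf.expectation (PA_iter T k (Suc j)) (\<lambda>E. DD E ^ 2) =
     (1 + 2 * (1 / (2 * d))) * measure_pmf.expectation (PA_iter T k j) (\<lambda>E. DD E ^ 2) + (1 / (2 * d)) * \<mu>"
    unfolding exp_DD2_iter[OF assms(1)] \<mu>_def d_def[symmetric] using dpos by simp
  show ?case unfolding e mus
    by (rule var_step) (use mu0 dpos assms(2) Suc \<mu>_def in auto)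
qed



lemma hF_nonneg: "0 \<le> hF d" unfolding hF_def by simp

lemma FF_nonneg: "0 \<le> FF E" unfolding FF_def by (intro sum_nonneg) (simp add: hF_nonneg)

lemma FF_ge_DD: "DD E ^ 3 \<le> FF E"
proof (cases "0 \<in># endpoints E")
  case True
  have "DD E ^ 3 \<le> hF (count (endpoints E) 0)" unfolding DD_def hF_def
    by (simp add: power3_eq_cube mult_mono)
  also have "\<dots> \<le> FF E" unfolding FF_def
    by (rule member_le_sum[OF True]) (auto simp: hF_nonneg)
  finally show ?thesis .
next
  case False
  then show ?thesis unfolding DD_def using FF_nonneg by (simp add: not_in_iff)
qed

lemma FF_iso:
  assumes "good n E" "graph_iso E E'"
  shows "FF E' = FF E"
proof -
  obtain f where f: "inj_on f (\<Union>E)" "(\<lambda>e. f ` e) ` E = E'" using assms(2) unfolding graph_iso_def by blast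
  have fin: "finite E" using assms(1) unfolding good_def by auto
  let ?M = "endpoints E"
  have ep: "endpoints E' = image_mset f ?M"
    using endpoints_iso[OF fin good_fin_edges[OF assms(1)] f(1)] f(2) by simp
  have setE: "set_mset ?M = \<Union>E" using set_mset_endpoints[OF fin good_fin_edges[OF assms(1)]] .
  have inj: "inj_on f (set_mset ?M)" using f(1) setE by simp
  have cnt: "count (image_mset f ?M) (f x) = count ?M x" if "x \<in># ?M" for x
  proof -
    have "f -` {f x} \<inter> set_mset ?M = {x}" using inj that unfolding inj_on_def by auto
    then show ?thesis by (simp add: count_image_mset)
  qed
  have "FF E' = (\<Sum>y\<in>f ` set_mset ?M. hF (count (image_mset f ?M) y))"
    unfolding FF_def ep by simp
  also have "\<dots> = (\<Sum>x\<in>set_mset ?M. hF (count (image_mset f ?M) (f x)))"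
    by (rule sum.reindex[OF inj, unfolded o_def])
  also have "\<dots> = FF E" unfolding FF_def using cnt by (intro sum.cong) auto
  finally show ?thesis .
qed

definition Bc :: "real \<Rightarrow> nat \<Rightarrow> nat set set set set" where
  "Bc t n = {c. \<exists>E\<in>c. good n E \<and> t \<le> FF E}"

lemma class_prob:
  assumes "good k T" "k \<le> n"
  shows "measure_pmf.prob (map_pmf iso_class (PA n k T)) (Bc t n) = measure_pmf.prob (PA n k T) {E. t \<le> FF E}"
proof -
  have "iso_class -` Bc t n \<inter> set_pmf (PA n k T) = {E. t \<le> FF E} \<inter> set_pmf (PA n k T)"
  proof (intro equalityI subsetI)
    fix E assume E: "E \<in> iso_class -` Bc t n \<inter> set_pmf (PA n k T)"
    then have g: "good n E" using PA_good[OF assms] by auto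
    from E obtain E' where "E' \<in> iso_class E" "good n E'" "t \<le> FF E'" unfolding Bc_def by auto
    then show "E \<in> {E. t \<le> FF E} \<inter> set_pmf (PA n k T)" using FF_iso[OF g] E unfolding iso_class_def by auto
  next
    fix E assume E: "E \<in> {E. t \<le> FF E} \<inter> set_pmf (PA n k T)"
    then have g: "good n E" using PA_good[OF assms] by auto
    have "E \<in> iso_class E" using graph_iso_refl unfolding iso_class_def by auto
    then show "E \<in> iso_class -` Bc t n \<inter> set_pmf (PA n k T)" using E g unfolding Bc_def by auto
  qed
  then show ?thesis
    by (simp only: measure_map_pmf) (metis measure_Int_set_pmf)
qed

lemma markov_FF:
  assumes "finite (set_pmf P)" "t > 0"
  shows "measure_pmf.prob P {E. t \<le> FF E} \<le> measure_pmf.expectation P FF / t"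
proof -
  have "measure_pmf.prob P {E. t \<le> FF E} = measure_pmf.expectation P (indicator {E. t \<le> FF E})" by simp
  also have "\<dots> \<le> measure_pmf.expectation P (\<lambda>E. (1/t) * FF E + 0)"
    using assms FF_nonneg by (intro exp_mono) (auto simp: indicator_def field_simps)
  also have "\<dots> = measure_pmf.expectation P FF / t" using assms by (subst exp_lin) auto
  finally show ?thesis .
qed

lemma cheb:
  fixes j :: nat
  assumes "good k T" "DD T > 0"
  defines "\<mu> \<equiv> measure_pmf.expectation (PA_iter T k j) DD"
  shows "1 - 6 / DD T \<le> measure_pmf.prob (PA_iter T k j) {E. \<mu> ^ 3 / 8 \<le> FF E}"
proof -
  let ?P = "PA_iter T k j"
  have fin: "finite (set_pmf ?P)" using PA_iter_finite[OF assms(1)] .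
  have mupos: "\<mu> > 0" unfolding \<mu>_def exp_DD_iter[OF assms(1)]
    using assms(2) pr_ge1[of k 1 j] assms(1) unfolding good_def by (simp add: less_le_trans)
  define s where "s = measure_pmf.expectation ?P (\<lambda>E. DD E ^ 2)"
  have sb: "s \<le> (1 + 3 / (2 * DD T)) * \<mu>^2 - 3/2 * \<mu>" unfolding s_def \<mu>_def by (rule var_bound[OF assms(1,2)])
  have ind: "(indicator {E. DD E \<le> \<mu>/2} E :: real) \<le> (4 / \<mu>^2) * DD E ^ 2 + (- 8 / \<mu>) * DD E + 4" for E
  proof (cases "DD E \<le> \<mu>/2")
    case True
    then have "\<mu>/2 \<le> \<mu> - DD E" by simp
    then have "(\<mu>/2)^2 \<le> (\<mu> - DD E)^2" using mupos by (intro power_mono) auto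
    then have "1 \<le> (4 / \<mu>^2) * (\<mu> - DD E)^2" using mupos by (simp add: field_simps power2_eq_square)
    moreover have "(4 / \<mu>^2) * (\<mu> - DD E)^2 = (4 / \<mu>^2) * DD E ^ 2 + (- 8 / \<mu>) * DD E + 4"
      using mupos by (simp add: field_simps power2_eq_square)
    ultimately show ?thesis using True by simp
  next
    case False
    have nn: "0 \<le> (4 / \<mu>^2) * (\<mu> - DD E)^2" by simp
    have eq: "(4 / \<mu>^2) * (\<mu> - DD E)^2 = (4 / \<mu>^2) * DD E ^ 2 + (- 8 / \<mu>) * DD E + 4"
      using mupos by (simp add: field_simps power2_eq_square)
    have i0: "indicator {E. DD E \<le> \<mu>/2} E = (0::real)" using False by simp
    show ?thesis using nn eq i0 by linarith
  qed
  have "measure_pmf.prob ?P {E. DD E \<le> \<mu>/2} \<le> measure_pmf.expectation ?P (\<lambda>E. (4 / \<mu>^2) * DD E ^ 2 + (- 8 / \<mu>) * DD E + 4)"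
    unfolding prob_exp by (rule exp_mono[OF fin ind])
  also have "\<dots> = (4 / \<mu>^2) * s + (- 8 / \<mu>) * \<mu> + 4" unfolding s_def \<mu>_def by (rule exp_lin2[OF fin])
  also have "\<dots> \<le> (4 / \<mu>^2) * ((1 + 3 / (2 * DD T)) * \<mu>^2 - 3/2 * \<mu>) + (- 8 / \<mu>) * \<mu> + 4"
    by (intro add_right_mono mult_left_mono sb) simp
  also have "\<dots> = 6 / DD T - 6 / \<mu>" using mupos assms(2) by (simp add: field_simps power2_eq_square)
  also have "\<dots> \<le> 6 / DD T" using mupos by simp
  finally have pl: "measure_pmf.prob ?P {E. DD E \<le> \<mu>/2} \<le> 6 / DD T" .
  have ind2: "(-1) * indicator {E. DD E \<le> \<mu>/2} E + 1 \<le> (indicator {E. \<mu> ^ 3 / 8 \<le> FF E} E :: real)" for E :: "nat set set"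
  proof (cases "DD E \<le> \<mu>/2")
    case False
    then have "(\<mu>/2)^3 \<le> DD E ^ 3" using mupos by (intro power_mono) auto
    then have "\<mu> ^ 3 / 8 \<le> FF E" using FF_ge_DD[of E] by (simp add: power_divide)
    then show ?thesis using False by simp
  qed (simp add: indicator_def)
  have "1 - measure_pmf.prob ?P {E. DD E \<le> \<mu>/2} = measure_pmf.expectation ?P (\<lambda>E. (-1) * indicator {E. DD E \<le> \<mu>/2} E + 1)"
    by (subst exp_lin[OF fin]) simp
  also have "\<dots> \<le> measure_pmf.expectation ?P (indicator {E. \<mu> ^ 3 / 8 \<le> FF E})"
    by (rule exp_mono[OF fin ind2])
  finally show ?thesis using pl by simp
qed



lemma pr_add: "pr a x (d + j) = pr a x d * pr a (x + d) j"
  by (induction j) (simp_all add: pr_def add.assoc mult.assoc)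

lemma pr_nonneg: "2 \<le> x \<Longrightarrow> 0 \<le> a \<Longrightarrow> 0 \<le> pr a x j"
  using pr_ge1[of x a j] by simp

lemma pr_cube: "2 \<le> x \<Longrightarrow> pr 3 x j \<le> (pr 1 x j) ^ 3"
proof (induction j)
  case 0 then show ?case by (simp add: pr_def)
next
  case (Suc j)
  define y where "y = 1 / (2 * (real (x + j) - 1))"
  have y0: "0 \<le> y" using Suc.prems unfolding y_def by simp
  have f3: "3 / (2 * (real (x + j) - 1)) = 3 * y" unfolding y_def by simp
  have "1 + 3 * y \<le> (1 + y) ^ 3" using y0 by (simp add: power3_eq_cube algebra_simps)
  then have "pr 3 x j * (1 + 3 * y) \<le> (pr 1 x j) ^ 3 * (1 + y) ^ 3"
    using Suc y0 pr_nonneg[of x 3 j] pr_nonneg[of x 1 j] by (intro mult_mono) auto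
  then show ?case unfolding pr_Suc f3 y_def[symmetric] by (simp add: power_mult_distrib)
qed

lemma pr_sq: "2 \<le> k \<Longrightarrow> pr 3 k d \<le> ((real (k + d) - 1) / (real k - 1)) ^ 2"
proof (induction d)
  case 0 then show ?case by (simp add: pr_def)
next
  case (Suc d)
  define e where "e = real (k + d) - 1"
  define K where "K = real k - 1"
  have e1: "1 \<le> e" "0 < K" using Suc.prems unfolding e_def K_def by auto
  have "pr 3 k (Suc d) = pr 3 k d * (1 + 3 / (2 * e))" unfolding pr_Suc e_def ..
  also have "\<dots> \<le> (e / K) ^ 2 * (1 + 3 / (2 * e))"
    using Suc e1 unfolding e_def K_def by (intro mult_right_mono) auto
  also have "\<dots> = (e^2 + 3/2 * e) / K^2" using e1 by (simp add: field_simps power2_eq_square)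
  also have "\<dots> \<le> (e + 1)^2 / K^2" using e1 by (intro divide_right_mono) (auto simp: power2_eq_square algebra_simps)
  also have "\<dots> = ((real (k + Suc d) - 1) / (real k - 1)) ^ 2" unfolding e_def K_def by (simp add: power_divide)
  finally show ?case .
qed

lemma alg: "M > 0 \<Longrightarrow> K > 0 \<Longrightarrow> A > 0 \<Longrightarrow>
  (CT::real) * ((M / K) ^ 2 * A ^ 3) / ((M * A) ^ 3 / 8) = 8 * CT / (K ^ 2 * M)"
  by (simp add: field_simps power2_eq_square power3_eq_cube)

lemma main_bound:
  assumes T: "good k T" and m: "3 \<le> m" "k \<le> m" and N: "m \<le> N"
  defines "CT \<equiv> FF T + 12 * (real k - 1)"
  shows "1 - 6 / (real m - 1) - 8 * CT / ((real k - 1)^2 * (real m - 1))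
     \<le> TV (map_pmf iso_class (PA N m (star m))) (map_pmf iso_class (PA N k T))"
proof -
  have S: "good m (star m)" using good_star m by simp
  have k2: "2 \<le> k" using T unfolding good_def by simp
  define A where "A = pr 1 m (N - m)"
  have A1: "1 \<le> A" unfolding A_def using pr_ge1 m by simp
  define \<mu> where "\<mu> = measure_pmf.expectation (PA_iter (star m) m (N - m)) DD"
  have DS: "DD (star m) = real m - 1" using m by (intro DD_star) simp
  have mu: "\<mu> = (real m - 1) * A" unfolding \<mu>_def A_def exp_DD_iter[OF S] DS by simp
  have mpos: "real m - 1 > 0" using m by simp
  have mupos: "\<mu> > 0" using mu A1 mpos by simp
  define t where "t = \<mu> ^ 3 / 8"
  have tpos: "t > 0" unfolding t_def using mupos by simp
  have pS: "1 - 6 / (real m - 1) \<le> measure_pmf.prob (PA N m (star m)) {E. t \<le> FF E}"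
    using cheb[OF S, of "N - m"] DD_star[of m] m unfolding PA_def t_def \<mu>_def by simp
  have CT0: "0 \<le> CT" unfolding CT_def using FF_nonneg[of T] k2 by simp
  have ET: "measure_pmf.expectation (PA N k T) FF \<le> CT * pr 3 k (N - k)"
  proof -
    have "measure_pmf.expectation (PA N k T) FF + 12 * (real (k + (N - k)) - 1) = CT * pr 3 k (N - k)"
      unfolding PA_def CT_def by (rule exp_FF_iter[OF T])
    moreover have "0 \<le> 12 * (real (k + (N - k)) - 1)" using k2 by simp
    ultimately show ?thesis by linarith
  qed
  have split: "pr 3 k (N - k) = pr 3 k (m - k) * pr 3 m (N - m)"
    using pr_add[of 3 k "m - k" "N - m"] m N by simp
  have "pr 3 k (N - k) \<le> ((real m - 1) / (real k - 1)) ^ 2 * A ^ 3"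
    unfolding split A_def
    using pr_sq[OF k2, of "m - k"] pr_cube[of m "N - m"] m pr_nonneg[of m 3 "N - m"] pr_nonneg[of k 3 "m - k"] k2
    by (intro mult_mono) auto
  then have ET2: "measure_pmf.expectation (PA N k T) FF \<le> CT * (((real m - 1) / (real k - 1)) ^ 2 * A ^ 3)"
    using ET CT0 by (meson mult_left_mono order_trans)
  have pT: "measure_pmf.prob (PA N k T) {E. t \<le> FF E} \<le> 8 * CT / ((real k - 1)^2 * (real m - 1))"
  proof -
    have "measure_pmf.prob (PA N k T) {E. t \<le> FF E} \<le> measure_pmf.expectation (PA N k T) FF / t"
      by (rule markov_FF[OF PA_finite[OF T] tpos])
    also have "\<dots> \<le> CT * (((real m - 1) / (real k - 1)) ^ 2 * A ^ 3) / t"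
      using ET2 tpos by (simp add: divide_right_mono)
    also have "\<dots> = 8 * CT / ((real k - 1)^2 * (real m - 1))"
      unfolding t_def mu using A1 mpos k2 alg[of "real m - 1" "real k - 1" A CT] by simp
    finally show ?thesis .
  qed
  have "measure_pmf.prob (map_pmf iso_class (PA N m (star m))) (Bc t N) - measure_pmf.prob (map_pmf iso_class (PA N k T)) (Bc t N)
     \<le> TV (map_pmf iso_class (PA N m (star m))) (map_pmf iso_class (PA N k T))"
    using TV_ge by (meson abs_ge_self order_trans)
  moreover have "measure_pmf.prob (map_pmf iso_class (PA N m (star m))) (Bc t N) = measure_pmf.prob (PA N m (star m)) {E. t \<le> FF E}"
    using class_prob[OF S N] .
  moreover have "measure_pmf.prob (map_pmf iso_class (PA N k T)) (Bc t N) = measure_pmf.prob (PA N k T) {E. t \<le> FF E}"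
    using class_prob[OF T] m N by simp
  ultimately show ?thesis using pS pT by linarith
qed

lemma tree_good:
  assumes "2 \<le> k" "is_tree k T" shows "good k T"
proof -
  have sub: "T \<subseteq> {{a, b} | a b. a < k \<and> b < k \<and> a \<noteq> b}" using assms(2) unfolding is_tree_def by simp
  have "{{a, b} | a b. a < k \<and> b < k \<and> a \<noteq> b} \<subseteq> (\<lambda>(a,b). {a,b}) ` ({..<k} \<times> {..<k})" by auto
  then have "finite T" using sub by (meson finite_SigmaI finite_imageI finite_lessThan finite_subset)
  then show ?thesis using assms sub unfolding is_tree_def good_def by blast
qed

theorem theorem3:
  fixes k :: nat and T :: "nat set set"
  assumes "2 \<le> k" and "is_tree k T"
  shows "(\<lambda>m. delta m (star m) k T) \<longlonglongrightarrow> 1"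
proof -
  have T: "good k T" using tree_good assms by blast
  define CT where "CT = FF T + 12 * (real k - 1)"
  define K where "K = 6 + 8 * CT / (real k - 1)^2"
  have bnd: "1 - K / (real m - 1) \<le> delta m (star m) k T \<and> delta m (star m) k T \<le> 1" if "max k 3 \<le> m" for m
  proof (rule delta_bounds)
    show "good m (star m)" using good_star that by simp
    show "good k T" using T .
    fix N assume "m \<le> N"
    have "1 - K / (real m - 1) = 1 - 6 / (real m - 1) - 8 * CT / ((real k - 1)^2 * (real m - 1))"
      unfolding K_def by (simp add: field_simps add_divide_distrib diff_divide_distrib)
    then show "1 - K / (real m - 1) \<le> TV (map_pmf iso_class (PA N m (star m))) (map_pmf iso_class (PA N k T))"
      using main_bound[OF T _ _ \<open>m \<le> N\<close>, of] that unfolding CT_def by simp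
  qed
  have "LIM m sequentially. (-1 + real m :: real) :> at_top"
    by (rule filterlim_tendsto_add_at_top[OF tendsto_const filterlim_real_sequentially])
  then have "LIM m sequentially. (real m - 1 :: real) :> at_infinity"
    by (simp add: filterlim_at_top_imp_at_infinity)
  then have "(\<lambda>m. K / (real m - 1)) \<longlonglongrightarrow> 0"
    by (rule tendsto_divide_0[OF tendsto_const])
  then have l: "(\<lambda>m. 1 - K / (real m - 1)) \<longlonglongrightarrow> 1"
    using tendsto_diff[OF tendsto_const[of 1]] by fastforce
  show ?thesis
  proof (rule tendsto_sandwich[OF _ _ l tendsto_const])
    show "\<forall>\<^sub>F m in sequentially. 1 - K / (real m - 1) \<le> delta m (star m) k T"
      using bnd by (intro eventually_sequentiallyI[of "max k 3"]) blast
    show "\<forall>\<^sub>F m in sequentially. delta m (star m) k T \<le> 1"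
      using bnd by (intro eventually_sequentiallyI[of "max k 3"]) blast
  qed
qed

end
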